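(* Let $X$ be a Banach space, $K\subseteq X^{*}$ a weak*-compact convex set, $B\subseteq K$ a set that (I)-generates $K$, and $A=(a_{nk})_{n,k\in\mathbb{N}}$ a positive regular matrix. Then for each $p\geq 1$ and every bounded sequence $(x_k)_{k\in\mathbb{N}}$ in $X$, \[\sup_{x^{*}\in K}\limsup_{n\to\infty}\sum_{k=1}^{\infty}a_{nk}|x^{*}(x_k)|^{p}=\sup_{x^{*}\in B}\limsup_{n\to\infty}\sum_{k=1}^{\infty}a_{nk}|x^{*}(x_k)|^{p}.\]
   Context: A complex matrix $A=(a_{nk})$ is regular if $\sup_n\sum_k|a_{nk}|<\infty$, $\lim_n\sum_k a_{nk}=1$ and $\lim_n a_{nk}=0$ for every $k$ (equivalently, it maps convergent sequences to sequences converging to the same limit via $(s_k)\mapsto(\sum_k a_{nk}s_k)_n$); positive means $a_{nk}\ge 0$. For a weak*-compact convex $K\subseteq X^{*}$, a subset $B\subseteq K$ (I)-generates $K$ if whenever $B=\bigcup_{n=1}^\infty B_n$, $K$ equals the norm-closure of the convex hull of $\bigcup_n\overline{\mathrm{co}}^{w^*}(B_n)$ (weak*-closed convex hulls). *)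

theory Defs
  imports "HOL-Analysis.Analysis"
begin

text \<open>The dual space X* of a (real) Banach space 'a is modelled as bounded linear functionals (blinfun).
  The weak* topology is the coarsest topology making all evaluations f \<mapsto> f x continuous,
  i.e. the pullback of the product (pointwise) topology on 'a \<Rightarrow> real.\<close>
definition weak_star_topology :: "('a::real_normed_vector \<Rightarrow>\<^sub>L real) topology" where
  "weak_star_topology = pullback_topology UNIV blinfun_apply (powertop_real UNIV)"

definition weak_star_closed_convex_hull ::
  "('a::real_normed_vector \<Rightarrow>\<^sub>L real) set \<Rightarrow> ('a \<Rightarrow>\<^sub>L real) set" where
  "weak_star_closed_convex_hull S =
     \<Inter>{C. closedin weak_star_topology C \<and> convex C \<and> S \<subseteq> C}"

definition I_generates ::
  "('a::real_normed_vector \<Rightarrow>\<^sub>L real) set \<Rightarrow> ('a \<Rightarrow>\<^sub>L real) set \<Rightarrow> bool" where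
  "I_generates B K \<longleftrightarrow> B \<subseteq> K \<and>
     (\<forall>Bs :: nat \<Rightarrow> ('a \<Rightarrow>\<^sub>L real) set. B = (\<Union>n. Bs n) \<longrightarrow>
        K = closure (convex hull (\<Union>n. weak_star_closed_convex_hull (Bs n))))"

definition regular_matrix :: "(nat \<Rightarrow> nat \<Rightarrow> real) \<Rightarrow> bool" where
  "regular_matrix a \<longleftrightarrow>
     (\<forall>n. summable (\<lambda>k. \<bar>a n k\<bar>)) \<and>
     bdd_above (range (\<lambda>n. \<Sum>k. \<bar>a n k\<bar>)) \<and>
     (\<lambda>n. \<Sum>k. a n k) \<longlonglongrightarrow> 1 \<and>
     (\<forall>k. (\<lambda>n. a n k) \<longlonglongrightarrow> 0)"

definition positive_matrix :: "(nat \<Rightarrow> nat \<Rightarrow> real) \<Rightarrow> bool" where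
  "positive_matrix a \<longleftrightarrow> (\<forall>n k. a n k \<ge> 0)"

end

theory Submission imports Defs begin

lemma powr_conv0:
  fixes a b u v p :: real
  assumes "p \<ge> 1" "a \<ge> 0" "b \<ge> 0" "u \<ge> 0" "v \<ge> 0" "u + v = 1"
  shows "(u * a + v * b) powr p \<le> u * a powr p + v * b powr p"
proof -
  have single: "(w * c) powr p \<le> w * c powr p" if "0 \<le> w" "w \<le> 1" "c \<ge> 0" for w c :: real
  proof -
    have "(w * c) powr p = w powr p * c powr p" using that by (simp add: powr_mult)
    also have "w powr p \<le> w powr 1" using powr_mono'[of 1 p w] that assms(1) by simp
    hence "w powr p * c powr p \<le> w * c powr p" using that by (simp add: mult_right_mono)
    finally show ?thesis .
  qed
  show ?thesis
  proof (cases "a = 0 \<or> b = 0")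
    case True
    then show ?thesis
    proof
      assume "a = 0" thus ?thesis using single[of v b] assms by auto
    next
      assume "b = 0" thus ?thesis using single[of u a] assms by auto
    qed
  next
    case False
    hence "a > 0" "b > 0" using assms by auto
    have "(\<lambda>x. x powr p) ((1 - v) *\<^sub>R a + v *\<^sub>R b) \<le> (1 - v) * (\<lambda>x. x powr p) a + v * (\<lambda>x. x powr p) b"
      by (rule convex_onD[OF powr_convex[OF assms(1)]]) (use assms \<open>a>0\<close> \<open>b>0\<close> in auto)
    moreover have "1 - v = u" using assms by simp
    ultimately show ?thesis by simp
  qed
qed

lemma abs_powr_conv:
  fixes a b u v p :: real
  assumes "p \<ge> 1" "u \<ge> 0" "v \<ge> 0" "u + v = 1"
  shows "\<bar>u * a + v * b\<bar> powr p \<le> u * \<bar>a\<bar> powr p + v * \<bar>b\<bar> powr p"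
proof -
  have "\<bar>u * a + v * b\<bar> \<le> u * \<bar>a\<bar> + v * \<bar>b\<bar>" using assms
    by (metis abs_mult abs_of_nonneg abs_triangle_ineq)
  hence "\<bar>u * a + v * b\<bar> powr p \<le> (u * \<bar>a\<bar> + v * \<bar>b\<bar>) powr p" using assms by (intro powr_mono2) auto
  also have "\<dots> \<le> u * \<bar>a\<bar> powr p + v * \<bar>b\<bar> powr p" by (rule powr_conv0) (use assms in auto)
  finally show ?thesis .
qed

lemma wstar_cont:
  fixes c :: "nat \<Rightarrow> real" and y :: "nat \<Rightarrow> 'a::real_normed_vector" and p :: real
  assumes "p > 0"
  shows "continuous_map weak_star_topology euclideanreal
     (\<lambda>g. \<Sum>k<N. c k * \<bar>blinfun_apply g (y k)\<bar> powr p)"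
proof -
  have ca: "continuous_map euclideanreal euclideanreal (\<lambda>r::real. \<bar>r\<bar> powr p)"
    using assms by (simp, intro continuous_on_powr') (auto intro!: continuous_intros)
  have "continuous_map (powertop_real UNIV) euclideanreal
     (\<lambda>u. \<Sum>k<N. c k * \<bar>u (y k)\<bar> powr p)"
  proof (intro continuous_map_sum continuous_map_real_mult continuous_map_const[THEN iffD2] disjI2)
    fix k
    show "continuous_map (powertop_real UNIV) euclideanreal (\<lambda>u. \<bar>u (y k)\<bar> powr p)"
      using continuous_map_compose[OF continuous_map_product_projection[of "y k" UNIV "\<lambda>_. euclideanreal"] ca]
      by (simp add: o_def)
  qed auto
  hence "continuous_map weak_star_topology euclideanreal
     ((\<lambda>u. \<Sum>k<N. c k * \<bar>u (y k)\<bar> powr p) o blinfun_apply)"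
    unfolding weak_star_topology_def by (rule continuous_map_pullback)
  thus ?thesis by (simp add: o_def)
qed

theorem corollary3p3:
  fixes K B :: "('a::banach \<Rightarrow>\<^sub>L real) set"
    and a :: "nat \<Rightarrow> nat \<Rightarrow> real"
    and p :: real
    and x :: "nat \<Rightarrow> 'a"
  assumes "compactin weak_star_topology K"
    and "convex K"
    and "B \<subseteq> K"
    and "I_generates B K"
    and "positive_matrix a"
    and "regular_matrix a"
    and "p \<ge> 1"
    and "bounded (range x)"
  shows "(SUP f\<in>K. limsup (\<lambda>n. ereal (\<Sum>k. a n k * \<bar>blinfun_apply f (x k)\<bar> powr p)))
       = (SUP f\<in>B. limsup (\<lambda>n. ereal (\<Sum>k. a n k * \<bar>blinfun_apply f (x k)\<bar> powr p)))"
proof -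
  define S where "S n g = (\<Sum>k. a n k * \<bar>blinfun_apply g (x k)\<bar> powr p)" for n and g :: "'a \<Rightarrow>\<^sub>L real"
  define \<phi> where "\<phi> g = limsup (\<lambda>n. ereal (S n g))" for g
  have apos: "\<And>n k. a n k \<ge> 0" using assms(5) by (simp add: positive_matrix_def)
  have p0: "p > 0" using assms(7) by simp
  obtain Mx where Mx: "Mx > 0" "\<And>k. norm (x k) \<le> Mx"
    using assms(8) by (meson bounded_pos rangeI)
  have asum: "\<And>n. summable (a n)" using assms(6) apos by (simp add: regular_matrix_def)
  obtain L where L: "\<And>n. (\<Sum>k. a n k) \<le> L"
    using assms(6) apos unfolding regular_matrix_def bdd_above_def by auto
  have bnd: "\<bar>blinfun_apply g (x k)\<bar> \<le> norm g * Mx" for g k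
  proof -
    have "\<bar>blinfun_apply g (x k)\<bar> \<le> norm g * norm (x k)" using norm_blinfun[of g "x k"] by simp
    also have "\<dots> \<le> norm g * Mx" using Mx by (simp add: mult_left_mono)
    finally show ?thesis .
  qed
  have summ: "summable (\<lambda>k. a n k * \<bar>blinfun_apply g (x k)\<bar> powr p)" for n g
  proof (rule summable_comparison_test')
    show "summable (\<lambda>k. a n k * (norm g * Mx) powr p)" using asum by (simp add: summable_mult2)
    fix k
    have "\<bar>blinfun_apply g (x k)\<bar> powr p \<le> (norm g * Mx) powr p"
      using bnd p0 by (intro powr_mono2) auto
    thus "norm (a n k * \<bar>blinfun_apply g (x k)\<bar> powr p) \<le> a n k * (norm g * Mx) powr p"
      using apos[of n k] by (simp add: mult_left_mono)
  qed
  have Lnn: "L \<ge> 0" using L[of 0] suminf_nonneg[OF asum[of 0]] apos by (meson order_trans)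
  have key: "\<phi> f \<le> ereal (z + e)" if f: "f \<in> K" and z: "(SUP g\<in>B. \<phi> g) \<le> ereal z" and e: "e > 0" for f z e
  proof -
    define t' where "t' = z + e/2"
    define C where "C m = {g. \<forall>n\<ge>m. S n g \<le> t'}" for m
    define Bs where "Bs m = B \<inter> C m" for m
    have "B = (\<Union>m. Bs m)"
    proof (intro equalityI subsetI)
      fix g assume g: "g \<in> B"
      have "\<phi> g \<le> ereal z" using z g by (meson SUP_upper order_trans)
      also have "\<dots> < ereal t'" using e by (simp add: t'_def)
      finally have "eventually (\<lambda>n. ereal (S n g) < ereal t') sequentially"
        unfolding \<phi>_def by (rule Limsup_lessD)
      then obtain m where "\<forall>n\<ge>m. S n g < t'" by (auto simp: eventually_sequentially)
      hence "g \<in> Bs m" using g by (auto simp: Bs_def C_def less_imp_le)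
      thus "g \<in> (\<Union>m. Bs m)" by blast
    qed (auto simp: Bs_def)
    hence Keq: "K = closure (convex hull (\<Union>m. weak_star_closed_convex_hull (Bs m)))"
      using assms(4) by (simp add: I_generates_def)
    have Cconv: "convex (C m)" for m
    proof (rule convexI)
      fix g h and u v :: real
      assume gh: "g \<in> C m" "h \<in> C m" and uv: "0 \<le> u" "0 \<le> v" "u + v = 1"
      show "u *\<^sub>R g + v *\<^sub>R h \<in> C m"
        unfolding C_def
      proof (intro CollectI allI impI)
        fix n assume n: "m \<le> n"
        have "S n (u *\<^sub>R g + v *\<^sub>R h) \<le> (\<Sum>k. u * (a n k * \<bar>blinfun_apply g (x k)\<bar> powr p) + v * (a n k * \<bar>blinfun_apply h (x k)\<bar> powr p))"
          unfolding S_def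
        proof (rule suminf_le)
          fix k
          have "\<bar>u * blinfun_apply g (x k) + v * blinfun_apply h (x k)\<bar> powr p \<le> u * \<bar>blinfun_apply g (x k)\<bar> powr p + v * \<bar>blinfun_apply h (x k)\<bar> powr p"
            by (rule abs_powr_conv) (use uv assms(7) in auto)
          from mult_left_mono[OF this apos[of n k]]
          show "a n k * \<bar>blinfun_apply (u *\<^sub>R g + v *\<^sub>R h) (x k)\<bar> powr p \<le> u * (a n k * \<bar>blinfun_apply g (x k)\<bar> powr p) + v * (a n k * \<bar>blinfun_apply h (x k)\<bar> powr p)"
            by (simp add: blinfun.add_left blinfun.scaleR_left algebra_simps)
        qed (auto intro!: summable_add summable_mult summ)
        also have "\<dots> = (\<Sum>k. u * (a n k * \<bar>blinfun_apply g (x k)\<bar> powr p)) + (\<Sum>k. v * (a n k * \<bar>blinfun_apply h (x k)\<bar> powr p))"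
          by (rule suminf_add[symmetric]) (auto intro!: summable_mult summ)
        also have "\<dots> = u * S n g + v * S n h"
          unfolding S_def using summ by (simp add: suminf_mult)
        also have "\<dots> \<le> u * t' + v * t'"
          using gh n uv unfolding C_def by (intro add_mono mult_left_mono) auto
        also have "\<dots> = t'" using uv by (metis distrib_right mult_1)
        finally show "S n (u *\<^sub>R g + v *\<^sub>R h) \<le> t'" .
      qed
    qed
    have Cclosed: "closedin weak_star_topology (C m)" for m
    proof -
      have top: "topspace weak_star_topology = UNIV"
        by (simp add: weak_star_topology_def topspace_pullback_topology)
      have "C m = \<Inter>((\<lambda>(n,N). {g \<in> topspace weak_star_topology. (\<Sum>k<N. a n k * \<bar>blinfun_apply g (x k)\<bar> powr p) \<in> {..t'}}) ` ({m..} \<times> UNIV))"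
      proof (intro equalityI subsetI)
        fix g assume "g \<in> C m"
        hence g: "\<And>n. n \<ge> m \<Longrightarrow> S n g \<le> t'" by (auto simp: C_def)
        show "g \<in> \<Inter>((\<lambda>(n,N). {g \<in> topspace weak_star_topology. (\<Sum>k<N. a n k * \<bar>blinfun_apply g (x k)\<bar> powr p) \<in> {..t'}}) ` ({m..} \<times> UNIV))"
        proof (clarsimp simp: top)
          fix n N assume "m \<le> n"
          have "(\<Sum>k<N. a n k * \<bar>blinfun_apply g (x k)\<bar> powr p) \<le> S n g"
            unfolding S_def by (rule sum_le_suminf[OF summ]) (auto intro!: mult_nonneg_nonneg apos)
          thus "(\<Sum>k<N. a n k * \<bar>blinfun_apply g (x k)\<bar> powr p) \<le> t'" using g[OF \<open>m \<le> n\<close>] by simp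
        qed
      next
        fix g assume "g \<in> \<Inter>((\<lambda>(n,N). {g \<in> topspace weak_star_topology. (\<Sum>k<N. a n k * \<bar>blinfun_apply g (x k)\<bar> powr p) \<in> {..t'}}) ` ({m..} \<times> UNIV))"
        hence g: "\<And>n N. n \<ge> m \<Longrightarrow> (\<Sum>k<N. a n k * \<bar>blinfun_apply g (x k)\<bar> powr p) \<le> t'" by auto
        show "g \<in> C m" unfolding C_def S_def
          by (auto intro!: suminf_le_const summ g)
      qed
      also have "closedin weak_star_topology \<dots>"
        apply (rule closedin_Inter)
         apply force
        apply clarify
        apply (rule closedin_continuous_map_preimage[OF wstar_cont[OF p0]])
        apply simp
        done
      finally show ?thesis .
    qed
    have Cmono: "m \<le> m' \<Longrightarrow> C m \<subseteq> C m'" for m m' by (auto simp: C_def)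
    have Dconv: "convex (\<Union>m. C m)"
    proof (rule convexI)
      fix g h and u v :: real
      assume "g \<in> (\<Union>m. C m)" "h \<in> (\<Union>m. C m)" and uv: "0 \<le> u" "0 \<le> v" "u + v = 1"
      then obtain m m' where "g \<in> C m" "h \<in> C m'" by auto
      hence "g \<in> C (max m m')" "h \<in> C (max m m')" using Cmono by (meson max.cobounded1 max.cobounded2 subsetD)+
      hence "u *\<^sub>R g + v *\<^sub>R h \<in> C (max m m')" using Cconv uv by (simp add: convex_def)
      thus "u *\<^sub>R g + v *\<^sub>R h \<in> (\<Union>m. C m)" by blast
    qed
    have "weak_star_closed_convex_hull (Bs m) \<subseteq> C m" for m
      unfolding weak_star_closed_convex_hull_def
      by (rule Inter_lower) (use Cclosed Cconv in \<open>auto simp: Bs_def\<close>)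
    hence "convex hull (\<Union>m. weak_star_closed_convex_hull (Bs m)) \<subseteq> (\<Union>m. C m)"
      by (intro hull_minimal Dconv) blast
    hence fD: "f \<in> closure (\<Union>m. C m)" using f Keq closure_mono by blast
    define R where "R = (norm f + 1) * Mx"
    have "uniformly_continuous_on {0..R} (\<lambda>r::real. r powr p)"
      using p0 by (intro compact_uniformly_continuous continuous_on_powr') (auto intro!: continuous_intros)
    moreover define \<epsilon> where "\<epsilon> = e / (2 * (L + 1))"
    have \<epsilon>0: "\<epsilon> > 0" using e Lnn by (simp add: \<epsilon>_def)
    ultimately obtain d where d: "d > 0" "\<And>r r'. r \<in> {0..R} \<Longrightarrow> r' \<in> {0..R} \<Longrightarrow> dist r' r < d \<Longrightarrow> dist (r' powr p) (r powr p) < \<epsilon>"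
      unfolding uniformly_continuous_on_def by metis
    define \<delta> where "\<delta> = min 1 (d / Mx)"
    have "\<delta> > 0" using d Mx by (simp add: \<delta>_def)
    then obtain g where g: "g \<in> (\<Union>m. C m)" "dist g f < \<delta>" using fD closure_approachable by metis
    then obtain m where gm: "g \<in> C m" by auto
    have ngf: "norm (g - f) < \<delta>" using g by (simp add: dist_norm)
    have ng: "norm g \<le> norm f + 1"
      using ngf norm_triangle_ineq2[of g f] by (simp add: \<delta>_def)
    have termb: "\<bar>blinfun_apply f (x k)\<bar> powr p \<le> \<bar>blinfun_apply g (x k)\<bar> powr p + \<epsilon>" for k
    proof -
      have Rf: "\<bar>blinfun_apply f (x k)\<bar> \<in> {0..R}"
      proof -
        have "norm f * Mx \<le> (norm f + 1) * Mx" using Mx by (simp add: mult_right_mono)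
        thus ?thesis using bnd[of f k] by (simp add: R_def)
      qed
      have Rg: "\<bar>blinfun_apply g (x k)\<bar> \<in> {0..R}"
      proof -
        have "norm g * Mx \<le> (norm f + 1) * Mx" using Mx ng by (simp add: mult_right_mono)
        thus ?thesis using bnd[of g k] by (simp add: R_def)
      qed
      have "\<bar>\<bar>blinfun_apply f (x k)\<bar> - \<bar>blinfun_apply g (x k)\<bar>\<bar> \<le> \<bar>blinfun_apply (g - f) (x k)\<bar>"
        by (simp add: blinfun.diff_left abs_minus_commute)
      also have "\<dots> \<le> norm (g - f) * Mx" by (rule bnd)
      also have "\<dots> < \<delta> * Mx" using ngf Mx by simp
      also have "\<dots> \<le> d" using Mx d by (simp add: \<delta>_def min_def field_simps)
      finally have "dist \<bar>blinfun_apply f (x k)\<bar> \<bar>blinfun_apply g (x k)\<bar> < d" by (simp add: dist_real_def)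
      from d(2)[OF Rg Rf this] show ?thesis by (simp add: dist_real_def)
    qed
    have "S n f \<le> t' + \<epsilon> * L" if n: "n \<ge> m" for n
    proof -
      have "S n f \<le> (\<Sum>k. a n k * \<bar>blinfun_apply g (x k)\<bar> powr p + \<epsilon> * a n k)"
        unfolding S_def
      proof (rule suminf_le)
        fix k
        from mult_left_mono[OF termb[of k] apos[of n k]]
        show "a n k * \<bar>blinfun_apply f (x k)\<bar> powr p \<le> a n k * \<bar>blinfun_apply g (x k)\<bar> powr p + \<epsilon> * a n k"
          by (simp add: algebra_simps)
      qed (auto intro!: summable_add summ summable_mult asum)
      also have "\<dots> = (\<Sum>k. a n k * \<bar>blinfun_apply g (x k)\<bar> powr p) + (\<Sum>k. \<epsilon> * a n k)"
        by (rule suminf_add[symmetric]) (auto intro!: summable_mult summ asum)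
      also have "\<dots> = S n g + \<epsilon> * (\<Sum>k. a n k)"
        unfolding S_def using asum by (simp add: suminf_mult)
      also have "\<dots> \<le> t' + \<epsilon> * L"
        using gm n \<epsilon>0 L[of n] unfolding C_def by (intro add_mono mult_left_mono) auto
      finally show ?thesis .
    qed
    hence "eventually (\<lambda>n. ereal (S n f) \<le> ereal (z + e)) sequentially"
    proof -
      have "t' + \<epsilon> * L \<le> z + e"
      proof -
        have "\<epsilon> * L \<le> e / 2" using e Lnn by (simp add: \<epsilon>_def field_simps)
        thus ?thesis by (simp add: t'_def)
      qed
      thus ?thesis using \<open>\<And>n. n \<ge> m \<Longrightarrow> S n f \<le> t' + \<epsilon> * L\<close>
        unfolding eventually_sequentially by (intro exI[of _ m] allI impI) (auto intro: order_trans)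
    qed
    thus ?thesis unfolding \<phi>_def by (rule Limsup_bounded)
  qed
  have "(SUP f\<in>K. \<phi> f) \<le> (SUP f\<in>B. \<phi> f)"
  proof (rule SUP_least)
    fix f assume f: "f \<in> K"
    show "\<phi> f \<le> (SUP f\<in>B. \<phi> f)"
    proof (rule ereal_le_real)
      fix z assume z: "(SUP f\<in>B. \<phi> f) \<le> ereal z"
      show "\<phi> f \<le> ereal z"
      proof (rule ereal_le_epsilon2)
        fix e :: real assume "0 < e"
        thus "\<phi> f \<le> ereal z + ereal e" using key[OF f z] by simp
      qed
    qed
  qed
  moreover have "(SUP f\<in>B. \<phi> f) \<le> (SUP f\<in>K. \<phi> f)"
    using assms(3) by (rule SUP_subset_mono) simp
  ultimately show ?thesis unfolding \<phi>_def S_def by (rule antisym)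
qed

end
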